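(* Consider the network model, interest-based mobility model and FirstMeeting (FM) routing described in the context, with $\delta=\delta(n)>0$, $\delta(n)\to 0$. Let $T^{ib}_{FM}$ be the time at which the message is first delivered to $D$. Then there exist constants $c,c'>0$ (independent of $n$) such that for all sufficiently large $n$, $$\mathbb{E}[T^{ib}_{FM}] \ge \min\Big\{c\log(1/\delta(n)),\ \frac{c' n}{\log n}\Big\}.$$ In particular $\mathbb{E}[T^{ib}_{FM}]\to\infty$ as $n\to\infty$.
   Context: Network: fix an integer $m\ge 2$ independent of $n$. There are $n+2$ nodes: a source $S$, a destination $D$ and relays $R_1,\dots,R_n$. Each node $X$ has an interest profile, a unit vector in the closed positive orthant of the unit sphere of $\mathbb{R}^m$; $\angle(X,Y)$ denotes the angle between two profiles, so $\cos\angle(X,Y)=\langle X,Y\rangle\in[0,1]$. $S=(1,0,\dots,0)$ and $D=(0,1,0,\dots,0)$. The relay profiles are i.i.d.: the angle $\alpha_i=\angle(S,R_i)$ is uniform on $[0,\pi/2]$, and given $\alpha_i$, $R_i$ is uniform among unit vectors of the positive orthant making angle $\alpha_i$ with $S$. Profiles do not change in time. Conditional on the profiles, for each unordered pair $\{A,B\}$ of nodes the meeting instants of $A$ and $B$ form a Poisson process of rate $\lambda_{AB}$ (so the first meeting time is exponential with rate $\lambda_{AB}$), independently over pairs, starting at time $0$. Interest-based mobility: $\lambda_{AB}=k\cos\angle(A,B)+\delta$, where $\lambda>0$ is a fixed constant, $\delta=\delta(n)>0$ with $\delta(n)\to 0$, and $k=\frac{\pi}{2}(\lambda-\delta)$ (so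 that $\mathbb{E}[\lambda_{SR_i}]=\lambda$). FM routing: $S$ holds two copies of a message for $D$ and always keeps one. If the first node met by $S$ among $\{D,R_1,\dots,R_n\}$ is $D$, the message is delivered at that time. Otherwise, if it is $R_j$, the second copy is given to $R_j$; no further copies are created or transferred, and the message is delivered when the first of $S,R_j$ meets $D$. Expectations are over both the random profiles and the meeting processes. *)

theory Defs
  imports "HOL-Probability.Probability"
begin

text \<open>Interest profiles live in R^m, represented as functions nat => real
  (only coordinates j < m are relevant). Nodes are numbered: 0 = S, 1 = D,
  i+2 = relay R_i (i < n).\<close>

definition sq_norm :: "nat \<Rightarrow> (nat \<Rightarrow> real) \<Rightarrow> real" where
  "sq_norm d x = (\<Sum>j<d. (x j)^2)"

definition inner_m :: "nat \<Rightarrow> (nat \<Rightarrow> real) \<Rightarrow> (nat \<Rightarrow> real) \<Rightarrow> real" where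
  "inner_m d x y = (\<Sum>j<d. x j * y j)"

definition angle_dist :: "real measure" where
  "angle_dist = uniform_measure lborel {0..pi/2}"

definition pos_ball :: "nat \<Rightarrow> (nat \<Rightarrow> real) set" where
  "pos_ball d = {x \<in> space (PiM {..<d} (\<lambda>_. lborel)). (\<forall>j<d. 0 \<le> x j) \<and> sq_norm d x \<le> 1}"

text \<open>Uniform (normalized surface) measure on the positive orthant of the unit
  sphere of R^d, via the cone-measure construction: radial projection of the
  normalized Lebesgue measure on the positive part of the unit ball.\<close>
definition orth_sphere_uniform :: "nat \<Rightarrow> (nat \<Rightarrow> real) measure" where
  "orth_sphere_uniform d =
     distr (uniform_measure (PiM {..<d} (\<lambda>_. lborel)) (pos_ball d))
           (PiM {..<d} (\<lambda>_. lborel))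
           (\<lambda>x. \<lambda>j\<in>{..<d}. x j / sqrt (sq_norm d x))"

text \<open>Given alpha and v uniform on the positive orthant of the unit sphere of
  R^(m-1), the vector (cos alpha, sin alpha * v) is uniform among the unit vectors
  of the positive orthant of R^m making angle alpha with S = e_0.\<close>
definition relay_profile :: "real \<Rightarrow> (nat \<Rightarrow> real) \<Rightarrow> nat \<Rightarrow> real" where
  "relay_profile \<alpha> v = (\<lambda>j. if j = 0 then cos \<alpha> else sin \<alpha> * v (j - 1))"

definition profile :: "(nat \<Rightarrow> real \<times> (nat \<Rightarrow> real)) \<Rightarrow> nat \<Rightarrow> nat \<Rightarrow> real" where
  "profile P a =
     (if a = 0 then (\<lambda>j. if j = 0 then 1 else 0)
      else if a = 1 then (\<lambda>j. if j = 1 then 1 else 0)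
      else relay_profile (fst (P (a - 2))) (snd (P (a - 2))))"

text \<open>Meeting rate lambda_AB = k cos angle(A,B) + delta with k = pi/2 (lam - delta).\<close>
definition rate :: "nat \<Rightarrow> real \<Rightarrow> real \<Rightarrow> (nat \<Rightarrow> real \<times> (nat \<Rightarrow> real)) \<Rightarrow> nat \<Rightarrow> nat \<Rightarrow> real" where
  "rate m lam dl P a b = pi / 2 * (lam - dl) * inner_m m (profile P a) (profile P b) + dl"

definition node_pairs :: "nat \<Rightarrow> (nat \<times> nat) set" where
  "node_pairs n = {(a, b). a < b \<and> b < n + 2}"

definition exp1 :: "real measure" where
  "exp1 = density lborel (exponential_density 1)"

text \<open>A Poisson process of rate r: meeting instants are the partial sums of the
  i.i.d. Exp(1) variables e, scaled by 1/r.\<close>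
definition meeting_times :: "real \<Rightarrow> (nat \<Rightarrow> real) \<Rightarrow> real set" where
  "meeting_times r e = {(\<Sum>l\<le>k. e l) / r | k. True}"

definition first_meeting_after :: "real \<Rightarrow> (nat \<Rightarrow> real) \<Rightarrow> real \<Rightarrow> real" where
  "first_meeting_after r e t = Inf {s \<in> meeting_times r e. t \<le> s}"

definition pair_noise :: "((nat \<times> nat) \<times> nat \<Rightarrow> real) \<Rightarrow> nat \<Rightarrow> nat \<Rightarrow> nat \<Rightarrow> real" where
  "pair_noise E a b = (\<lambda>l. E ((min a b, max a b), l))"

text \<open>Sample space for n relays: i.i.d. relay profile data, and for each pair
  independent unit exponentials driving its meeting process.\<close>
definition Omega :: "nat \<Rightarrow> nat \<Rightarrow>
    ((nat \<Rightarrow> real \<times> (nat \<Rightarrow> real)) \<times> ((nat \<times> nat) \<times> nat \<Rightarrow> real)) measure" where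
  "Omega m n =
     PiM {..<n} (\<lambda>_. angle_dist \<Otimes>\<^sub>M orth_sphere_uniform (m - 1))
     \<Otimes>\<^sub>M PiM (node_pairs n \<times> UNIV) (\<lambda>_. exp1)"

definition meet :: "nat \<Rightarrow> real \<Rightarrow> real \<Rightarrow>
    (nat \<Rightarrow> real \<times> (nat \<Rightarrow> real)) \<Rightarrow> ((nat \<times> nat) \<times> nat \<Rightarrow> real) \<Rightarrow> nat \<Rightarrow> nat \<Rightarrow> real \<Rightarrow> real" where
  "meet m lam dl P E a b t = first_meeting_after (rate m lam dl P a b) (pair_noise E a b) t"

definition fm_delivery_time :: "nat \<Rightarrow> real \<Rightarrow> real \<Rightarrow> nat \<Rightarrow>
    (nat \<Rightarrow> real \<times> (nat \<Rightarrow> real)) \<times> ((nat \<times> nat) \<times> nat \<Rightarrow> real) \<Rightarrow> real" where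
  "fm_delivery_time m lam dl n \<omega> =
     (let P = fst \<omega>; E = snd \<omega>;
          fm = (\<lambda>b. meet m lam dl P E 0 b 0);
          T1 = Min (fm ` {1..n+1})
      in if fm 1 = T1 then T1
         else (let j = (SOME b. b \<in> {2..n+1} \<and> fm b = T1)
               in min (meet m lam dl P E 0 1 T1) (meet m lam dl P E j 1 T1)))"

definition expected_fm_time :: "nat \<Rightarrow> real \<Rightarrow> (nat \<Rightarrow> real) \<Rightarrow> nat \<Rightarrow> ennreal" where
  "expected_fm_time m lam \<delta> n =
     (\<integral>\<^sup>+ \<omega>. ennreal (fm_delivery_time m lam (\<delta> n) n \<omega>) \<partial>Omega m n)"

end

theory Submission
  imports Defs
begin


lemma fma:
  assumes "0 < r" "\<forall>l. 0 \<le> e l" "t0 \<le> e 0 / r"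
  shows "first_meeting_after r e t0 = e 0 / r"
  unfolding first_meeting_after_def
proof (rule cInf_eq_minimum)
  show "e 0 / r \<in> {s \<in> meeting_times r e. t0 \<le> s}"
    using assms unfolding meeting_times_def by (auto intro!: exI[of _ 0])
  fix y assume "y \<in> {s \<in> meeting_times r e. t0 \<le> s}"
  then obtain k where y: "y = (\<Sum>l\<le>k. e l) / r" unfolding meeting_times_def by auto
  have "e 0 \<le> (\<Sum>l\<le>k. e l)"
    using member_le_sum[of 0 "{..k}" e] assms(2) by auto
  then show "e 0 / r \<le> y" using y assms(1) by (simp add: divide_right_mono)
qed

lemma inner_e0: "1 \<le> m \<Longrightarrow> inner_m m (\<lambda>j. if j = 0 then 1 else 0) y = y 0"
proof -
  assume "1 \<le> m"
  have "inner_m m (\<lambda>j. if j = 0 then 1 else 0) y = (\<Sum>j\<in>{..<m}. if j = 0 then y j else 0)"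
    unfolding inner_m_def by (rule sum.cong) auto
  also have "\<dots> = y 0" using \<open>1 \<le> m\<close> by (subst sum.delta) auto
  finally show ?thesis .
qed

lemma inner_e1: "2 \<le> m \<Longrightarrow> inner_m m y (\<lambda>j. if j = 1 then 1 else 0) = y 1"
proof -
  assume "2 \<le> m"
  have "inner_m m y (\<lambda>j. if j = 1 then 1 else 0) = (\<Sum>j\<in>{..<m}. if j = 1 then y j else 0)"
    unfolding inner_m_def by (rule sum.cong) auto
  also have "\<dots> = y 1" using \<open>2 \<le> m\<close> by (subst sum.delta) auto
  finally show ?thesis .
qed

lemma rate_0_relay: "2 \<le> m \<Longrightarrow> rate m lam dl P 0 (k+2) = pi/2*(lam-dl) * cos (fst (P k)) + dl"
  unfolding rate_def profile_def by (simp add: inner_e0 relay_profile_def)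

lemma rate_0_1: "2 \<le> m \<Longrightarrow> rate m lam dl P 0 1 = dl"
  unfolding rate_def profile_def by (simp add: inner_e0)

lemma rate_relay_1: "2 \<le> m \<Longrightarrow> rate m lam dl P (k+2) 1 = pi/2*(lam-dl) * (sin (fst (P k)) * snd (P k) 0) + dl"
  unfolding rate_def profile_def using inner_e1[of m "relay_profile (fst (P k)) (snd (P k))"] by (simp add: relay_profile_def)



lemma cos_ge_half: "0 \<le> (x::real) \<Longrightarrow> x \<le> 1 \<Longrightarrow> 1/2 \<le> cos x"
proof -
  assume "0 \<le> x" "x \<le> 1"
  have "x \<le> pi/3" using \<open>x \<le> 1\<close> pi_gt3 by linarith
  then have "cos (pi/3) \<le> cos x" using \<open>0 \<le> x\<close> by (intro cos_monotone_0_pi_le) auto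
  then show ?thesis by (simp add: cos_60)
qed

lemma det:
  fixes P :: "nat \<Rightarrow> real \<times> (nat \<Rightarrow> real)" and E :: "(nat \<times> nat) \<times> nat \<Rightarrow> real"
  assumes m: "2 \<le> m" and Kdef: "K = pi/2*(lam-dl)" and K: "0 < K" and dl: "0 < dl" and i: "i < n"
    and a: "0 < a" "a \<le> 1"
    and t: "t = 1/(real(n+1)*(K+dl))"
    and ang: "\<forall>k<n. 0 \<le> fst (P k) \<and> fst (P k) \<le> pi/2"
    and v: "0 \<le> snd (P i) 0" "snd (P i) 0 \<le> 1"
    and noise: "\<forall>p\<in>node_pairs n. \<forall>l. 0 \<le> E (p,l)"
    and ai: "fst (P i) \<le> a"
    and e01: "1 < E ((0,1),0)" and e1i: "1 < E((1,i+2),0)" and e0i: "E((0,i+2),0) \<le> K*t/2"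
    and e0k: "\<forall>k\<in>{2..n+1}. k \<noteq> i+2 \<longrightarrow> (K+dl)*t < E((0,k),0)"
  shows "1/(K*a+dl) \<le> fm_delivery_time m lam dl n (P,E)"
proof -
  define fm where "fm b = meet m lam dl P E 0 b 0" for b
  define T1 where "T1 = Min (fm ` {1..n+1})"
  have tpos: "0 < t" using t K dl by simp
  have t_le: "t \<le> 1/(K+dl)" unfolding t using K dl
    by (intro divide_left_mono) (auto intro!: mult_pos_pos)
  have rk: "0 < rate m lam dl P 0 (k+2) \<and> rate m lam dl P 0 (k+2) \<le> K+dl" if "k < n" for k
  proof -
    have "0 \<le> cos (fst (P k))" using ang that by (intro cos_ge_zero) auto
    moreover have "cos (fst (P k)) \<le> 1" by simp
    ultimately have "K * cos (fst (P k)) \<le> K" "0 \<le> K * cos (fst (P k))"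
      using K by (auto simp: mult_le_cancel_left1)
    moreover have "rate m lam dl P 0 (k+2) = K * cos (fst (P k)) + dl"
      using rate_0_relay[OF m, of lam dl P k] Kdef by simp
    ultimately show ?thesis using K dl by simp
  qed
  have fm_rel: "fm (k+2) = E((0,k+2),0) / rate m lam dl P 0 (k+2)" if "k < n" for k
  proof -
    have np: "(0, k+2) \<in> node_pairs n" using that unfolding node_pairs_def by auto
    have pn: "pair_noise E 0 (k+2) = (\<lambda>l. E((0,k+2),l))" unfolding pair_noise_def by simp
    show ?thesis unfolding fm_def meet_def pn using rk[OF that] noise np
      by (subst fma) auto
  qed
  have np01: "(0, 1) \<in> node_pairs n" unfolding node_pairs_def by auto
  have pn01: "pair_noise E 0 1 = (\<lambda>l. E((0,1),l))" unfolding pair_noise_def by simp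
  have fm1: "fm 1 = E((0,1),0) / dl"
    unfolding fm_def meet_def pn01 rate_0_1[OF m] using dl noise np01
    by (subst fma) auto
  have "1/(K+dl) < 1/dl" using dl K by (intro divide_strict_left_mono) auto
  then have t_dl: "t < 1/dl" using t_le by linarith
  have "1/dl < E((0,1),0) / dl" using e01 dl by (intro divide_strict_right_mono) auto
  then have fm1_gt: "t < fm 1" unfolding fm1 using t_dl by linarith
  have fmi: "fm (i+2) \<le> t"
  proof -
    have c: "1/2 \<le> cos (fst (P i))" using ang i ai a by (intro cos_ge_half) auto
    have "K * (1/2) \<le> K * cos (fst (P i))" using c K by (intro mult_left_mono) auto
    moreover have "rate m lam dl P 0 (i+2) = K * cos (fst (P i)) + dl"
      using rate_0_relay[OF m, of lam dl P i] Kdef by simp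
    ultimately have "K/2 \<le> rate m lam dl P 0 (i+2)" using dl by simp
    moreover have "0 \<le> E((0,i+2),0)" using noise i unfolding node_pairs_def by auto
    ultimately have "E((0,i+2),0) / rate m lam dl P 0 (i+2) \<le> E((0,i+2),0) / (K/2)"
      using K by (intro divide_left_mono) auto
    also have "\<dots> \<le> (K*t/2) / (K/2)" using e0i K by (intro divide_right_mono) auto
    also have "\<dots> = t" using K by simp
    finally show ?thesis using fm_rel[OF i] by simp
  qed
  have fmk: "t < fm b" if "b \<in> {1..n+1}" "b \<noteq> i+2" for b
  proof (cases "b = 1")
    case True then show ?thesis using fm1_gt by simp
  next
    case False
    define k where "k = b - 2"
    have k: "b = k+2" "k < n" using that False unfolding k_def by auto
    have "(K+dl)*t < E((0,b),0)" using e0k that k by auto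
    then have "(K+dl)*t / rate m lam dl P 0 (k+2) < E((0,b),0) / rate m lam dl P 0 (k+2)"
      using rk[OF k(2)] by (intro divide_strict_right_mono) auto
    moreover have "t \<le> (K+dl)*t / rate m lam dl P 0 (k+2)"
      using rk[OF k(2)] tpos by (simp add: le_divide_eq mult_right_mono)
    ultimately show ?thesis using fm_rel[OF k(2)] k by simp
  qed
  have T1: "T1 = fm (i+2)" unfolding T1_def
  proof (rule Min_eqI)
    show "fm (i+2) \<in> fm ` {1..n+1}" using i by auto
    fix y assume "y \<in> fm ` {1..n+1}"
    then obtain b where "b \<in> {1..n+1}" "y = fm b" by auto
    then show "fm (i+2) \<le> y" using fmk[of b] fmi by (cases "b = i+2") auto
  qed simp
  have ne: "fm 1 \<noteq> T1" using T1 fmi fm1_gt by simp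
  have some: "(SOME b. b \<in> {2..n+1} \<and> fm b = T1) = i+2"
  proof (rule some_equality)
    show "i + 2 \<in> {2..n+1} \<and> fm (i + 2) = T1" using i T1 by auto
    fix b assume "b \<in> {2..n+1} \<and> fm b = T1"
    then show "b = i+2" using fmk[of b] fmi T1 by (cases "b = i+2") auto
  qed
  have T1le: "T1 \<le> t" using T1 fmi by simp
  define rD where "rD = rate m lam dl P (i+2) 1"
  have rD: "rD = K * (sin (fst (P i)) * snd (P i) 0) + dl"
    unfolding rD_def using rate_relay_1[OF m, of lam dl P i] Kdef by simp
  have sinb: "0 \<le> sin (fst (P i))" "sin (fst (P i)) \<le> a"
    using ang i ai sin_x_le_x[of "fst (P i)"] by (auto intro!: sin_ge_zero)
  have sv: "0 \<le> sin (fst (P i)) * snd (P i) 0" "sin (fst (P i)) * snd (P i) 0 \<le> a"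
    using sinb v by (auto simp: mult_le_one mult_le_cancel_left1 intro: order_trans[OF mult_left_le])
  have rDpos: "dl \<le> rD" using rD sv K by simp
  have rDle: "rD \<le> K*a + dl" using rD sv K by (simp add: mult_left_mono)
  have np1i: "(1, i+2) \<in> node_pairs n" using i unfolding node_pairs_def by auto
  have pn1i: "pair_noise E (i+2) 1 = (\<lambda>l. E((1,i+2),l))" unfolding pair_noise_def by simp
  have inv_le: "1/(K*a+dl) \<le> 1/rD" using rDpos rDle dl by (intro divide_left_mono) auto
  have "1/rD < E((1,i+2),0) / rD" using e1i rDpos dl by (intro divide_strict_right_mono) auto
  moreover have "t \<le> 1/rD"
  proof -
    have "K*a \<le> K" using K a by (simp add: mult_left_le)
    then have "1/(K+dl) \<le> 1/rD" using rDle rDpos dl by (intro divide_left_mono) auto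
    then show ?thesis using t_le by linarith
  qed
  ultimately have m2: "meet m lam dl P E (i+2) 1 T1 = E((1,i+2),0) / rD"
    unfolding meet_def pn1i rD_def[symmetric] using rDpos dl noise np1i T1le
    by (subst fma) auto
  have m1: "meet m lam dl P E 0 1 T1 = E((0,1),0) / dl"
    unfolding meet_def pn01 rate_0_1[OF m] using dl noise np01 T1le fm1_gt fm1
    by (subst fma) auto
  have res: "fm_delivery_time m lam dl n (P,E) = min (E((0,1),0) / dl) (E((1,i+2),0) / rD)"
    unfolding fm_delivery_time_def Let_def fst_conv snd_conv
    using ne some m1 m2 unfolding fm_def T1_def by simp
  have "1/(K*a+dl) \<le> E((0,1),0) / dl"
  proof -
    have "0 < (K * a + dl) * dl" using K a dl by (intro mult_pos_pos add_pos_pos) auto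
    then have "1/(K*a+dl) \<le> 1/dl" using K a dl by (intro divide_left_mono) auto
    also have "\<dots> \<le> E((0,1),0) / dl" using e01 dl by (intro divide_right_mono) auto
    finally show ?thesis .
  qed
  moreover have "1/(K*a+dl) \<le> E((1,i+2),0) / rD" using inv_le \<open>1/rD < _\<close> by simp
  ultimately show ?thesis using res by simp
qed



lemma prob_exp1: "prob_space exp1"
  unfolding exp1_def by (rule prob_space_exponential_density) simp

lemma sets_exp1[simp, measurable_cong]: "sets exp1 = sets lborel"
  unfolding exp1_def by simp

lemma space_exp1[simp]: "space exp1 = UNIV"
  unfolding exp1_def by simp

lemma distributed_exp1: "distributed exp1 lborel (\<lambda>x. x) (exponential_density 1)"
  unfolding distributed_def
proof (intro conjI)
  show "distr exp1 lborel (\<lambda>x. x) = density lborel (exponential_density 1)"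
    unfolding exp1_def by (rule distr_id2) simp
  show "(\<lambda>x. ennreal (exponential_density 1 x)) \<in> borel_measurable lborel" by simp
  show "(\<lambda>x. x) \<in> measurable exp1 lborel" by (simp add: measurable_ident_sets)
qed

lemma emeasure_exp1_gt: "0 \<le> a \<Longrightarrow> emeasure exp1 {a<..} = ennreal (exp (- a))"
proof -
  assume a: "0 \<le> a"
  interpret prob_space exp1 by (rule prob_exp1)
  have "prob {x \<in> space exp1. a < x} = exp (- a * 1)"
    by (rule exponential_distributedD_gt[OF distributed_exp1 a]) simp
  moreover have "{x \<in> space exp1. a < x} = {a<..}" by auto
  ultimately show ?thesis by (simp add: emeasure_eq_measure)
qed

lemma emeasure_exp1_le: "0 \<le> a \<Longrightarrow> emeasure exp1 {..a} = ennreal (1 - exp (- a))"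
proof -
  assume a: "0 \<le> a"
  interpret prob_space exp1 by (rule prob_exp1)
  have "prob {x \<in> space exp1. x \<le> a} = 1 - exp (- a * 1)"
    by (rule exponential_distributedD_le[OF distributed_exp1 a]) simp
  moreover have "{x \<in> space exp1. x \<le> a} = {..a}" by auto
  ultimately show ?thesis by (simp add: emeasure_eq_measure)
qed

lemma AE_exp1_nonneg: "AE x in exp1. 0 \<le> x"
  unfolding exp1_def
  by (subst AE_density) (auto simp: exponential_density_def)

lemma prob_angle: "prob_space angle_dist"
  unfolding angle_dist_def
  by (rule prob_space_uniform_measure) (auto simp: pi_gt_zero)

lemma sets_angle[simp, measurable_cong]: "sets angle_dist = sets lborel"
  unfolding angle_dist_def by simp

lemma space_angle[simp]: "space angle_dist = UNIV"
  unfolding angle_dist_def by simp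

lemma emeasure_angle: "0 < a \<Longrightarrow> a \<le> 1 \<Longrightarrow> emeasure angle_dist {a/2<..a} = ennreal (a / pi)"
proof -
  assume a: "0 < a" "a \<le> 1"
  have "a \<le> pi/2" using a pi_gt3 by linarith
  then have "{0..pi/2} \<inter> {a/2<..a} = {a/2<..a}" using a by auto
  then have "emeasure angle_dist {a/2<..a} = emeasure lborel {a/2<..a} / emeasure lborel {0..pi/2::real}"
    unfolding angle_dist_def by (subst emeasure_uniform_measure) auto
  also have "\<dots> = ennreal (a/2) / ennreal (pi/2)" using a by simp
  also have "\<dots> = ennreal (a/pi)" using a by (subst divide_ennreal) (auto simp: pi_gt_zero)
  finally show ?thesis .
qed

lemma AE_angle: "AE x in angle_dist. 0 \<le> x \<and> x \<le> pi/2"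
  unfolding angle_dist_def by (rule AE_uniform_measureI) auto



lemma pos_ball_sets: "pos_ball d \<in> sets (PiM {..<d} (\<lambda>_. lborel))"
  unfolding pos_ball_def sq_norm_def by measurable

lemma pos_ball_upper: "pos_ball d \<subseteq> PiE {..<d} (\<lambda>_. {0..1::real})"
proof
  fix x assume x: "x \<in> pos_ball d"
  then have xs: "x \<in> PiE {..<d} (\<lambda>_. UNIV)" unfolding pos_ball_def by (simp add: space_PiM)
  have "x j \<in> {0..1}" if j: "j < d" for j
  proof -
    have "(x j)^2 \<le> (\<Sum>j<d. (x j)^2)" using j by (intro member_le_sum) auto
    then have "(x j)^2 \<le> 1" using x unfolding pos_ball_def sq_norm_def by auto
    then have "\<bar>x j\<bar> \<le> 1" by (simp add: abs_square_le_1)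
    then have "x j \<le> 1" by simp
    then show ?thesis using x j unfolding pos_ball_def by auto
  qed
  then show "x \<in> PiE {..<d} (\<lambda>_. {0..1})" using xs by (auto simp: PiE_iff)
qed

lemma pos_ball_lower: "1 \<le> d \<Longrightarrow> PiE {..<d} (\<lambda>_. {0..1/real d}) \<subseteq> pos_ball d"
proof
  fix x assume d: "1 \<le> d" and x: "x \<in> PiE {..<d} (\<lambda>_. {0..1/real d})"
  have "(\<Sum>j<d. (x j)^2) \<le> (\<Sum>j<d. 1/real d)"
  proof (intro sum_mono)
    fix j assume "j \<in> {..<d}"
    then have "0 \<le> x j" "x j \<le> 1/real d" using x by (auto simp: PiE_iff)
    moreover have "1/real d \<le> 1" using d by simp
    ultimately have "x j * x j \<le> 1/real d * 1" by (intro mult_mono) auto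
    then show "(x j)^2 \<le> 1/real d" by (simp add: power2_eq_square)
  qed
  also have "\<dots> = 1" using d by simp
  finally show "x \<in> pos_ball d" using x unfolding pos_ball_def sq_norm_def
    by (auto simp: space_PiM PiE_iff)
qed

lemma pos_ball_measure: "1 \<le> d \<Longrightarrow> emeasure (PiM {..<d} (\<lambda>_. lborel)) (pos_ball d) \<noteq> 0 \<and>
   emeasure (PiM {..<d} (\<lambda>_. lborel)) (pos_ball d) \<noteq> \<infinity>"
proof -
  assume d: "1 \<le> d"
  interpret product_sigma_finite "\<lambda>_::nat. lborel :: real measure"
    by standard
  have up: "emeasure (PiM {..<d} (\<lambda>_. lborel)) (PiE {..<d} (\<lambda>_. {0..1::real})) = 1"
    by (subst emeasure_PiM) auto
  have lo: "emeasure (PiM {..<d} (\<lambda>_. lborel)) (PiE {..<d} (\<lambda>_. {0..1/real d})) = ennreal ((1/real d)^d)"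
    using d by (subst emeasure_PiM) (auto simp: prod_ennreal ennreal_power)
  have "PiE {..<d} (\<lambda>_. {0..1::real}) \<in> sets (PiM {..<d} (\<lambda>_. lborel))"
    by (intro sets_PiM_I_finite) auto
  then have "emeasure (PiM {..<d} (\<lambda>_. lborel)) (pos_ball d) \<le> emeasure (PiM {..<d} (\<lambda>_. lborel)) (PiE {..<d} (\<lambda>_. {0..1::real}))"
    by (intro emeasure_mono[OF pos_ball_upper])
  then have "emeasure (PiM {..<d} (\<lambda>_. lborel)) (pos_ball d) \<le> 1" using up by simp
  moreover have "ennreal ((1/real d)^d) \<le> emeasure (PiM {..<d} (\<lambda>_. lborel)) (pos_ball d)"
    using emeasure_mono[OF pos_ball_lower[OF d] pos_ball_sets] lo by simp
  moreover have "0 < (1/real d)^d" using d by simp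
  ultimately show ?thesis by (auto simp: top_unique)
qed

lemma prob_orth: "1 \<le> d \<Longrightarrow> prob_space (orth_sphere_uniform d)"
  unfolding orth_sphere_uniform_def
  apply (rule prob_space.prob_space_distr)
   apply (rule prob_space_uniform_measure)
  using pos_ball_measure apply auto[2]
  unfolding sq_norm_def by measurable

lemma AE_orth: "1 \<le> d \<Longrightarrow> AE v in orth_sphere_uniform d. 0 \<le> v 0 \<and> v 0 \<le> 1"
proof -
  assume d: "1 \<le> d"
  let ?f = "\<lambda>x. \<lambda>j\<in>{..<d}. x j / sqrt (sq_norm d x)"
  have meas: "?f \<in> measurable (uniform_measure (PiM {..<d} (\<lambda>_. lborel)) (pos_ball d)) (PiM {..<d} (\<lambda>_. lborel))"
    unfolding sq_norm_def by measurable
  have "AE x in uniform_measure (PiM {..<d} (\<lambda>_. lborel)) (pos_ball d). 0 \<le> ?f x 0 \<and> ?f x 0 \<le> 1"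
  proof (rule AE_uniform_measureI[OF pos_ball_sets], rule AE_I2, rule impI)
    fix x assume x: "x \<in> pos_ball d"
    have x0: "0 \<le> x 0" using x d unfolding pos_ball_def by auto
    have "(x 0)^2 \<le> sq_norm d x" unfolding sq_norm_def using d by (intro member_le_sum) auto
    then have "x 0 \<le> sqrt (sq_norm d x)" using x0 by (simp add: real_le_rsqrt)
    moreover have "0 \<le> sq_norm d x" unfolding sq_norm_def by (auto intro: sum_nonneg)
    ultimately have "x 0 / sqrt (sq_norm d x) \<le> 1"
      by (cases "sqrt (sq_norm d x) = 0") (auto simp: divide_le_eq)
    moreover have "0 \<le> x 0 / sqrt (sq_norm d x)"
      using x0 \<open>0 \<le> sq_norm d x\<close> by (intro divide_nonneg_nonneg) auto
    ultimately show "0 \<le> ?f x 0 \<and> ?f x 0 \<le> 1" using d by auto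
  qed
  moreover have m0: "(\<lambda>x::nat\<Rightarrow>real. x 0) \<in> borel_measurable (PiM {..<d} (\<lambda>_. lborel))"
    using measurable_component_singleton[of 0 "{..<d}" "\<lambda>_. lborel::real measure"] d by simp
  have st: "{x \<in> space (PiM {..<d} (\<lambda>_. lborel)). 0 \<le> x 0 \<and> x 0 \<le> (1::real)} \<in> sets (PiM {..<d} (\<lambda>_. lborel))"
    using m0 by measurable
  ultimately show ?thesis unfolding orth_sphere_uniform_def
    by (subst AE_distr_iff[OF meas st]) auto
qed



lemma AE_pair_fst: "prob_space N \<Longrightarrow> AE x in M. P x \<Longrightarrow> AE z in M \<Otimes>\<^sub>M N. P (fst z)"
proof -
  assume N: "prob_space N" and ae: "AE x in M. P x"
  interpret prob_space N by (rule N)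
  have "AE x in distr (M \<Otimes>\<^sub>M N) M fst. P x" unfolding distr_pair_fst using ae .
  then show ?thesis by (rule AE_distrD[OF measurable_fst])
qed

lemma distr_pair_snd': "prob_space M \<Longrightarrow> prob_space N \<Longrightarrow> distr (M \<Otimes>\<^sub>M N) N snd = N"
proof -
  assume M: "prob_space M" and N: "prob_space N"
  interpret N: prob_space N by (rule N)
  interpret M: prob_space M by (rule M)
  show ?thesis
  proof (intro measure_eqI)
    fix A assume A: "A \<in> sets (distr (M \<Otimes>\<^sub>M N) N snd)"
    from A have "emeasure (distr (M \<Otimes>\<^sub>M N) N snd) A = emeasure (M \<Otimes>\<^sub>M N) (space M \<times> A)"
      by (auto simp add: emeasure_distr space_pair_measure dest: sets.sets_into_space intro!: arg_cong2[where f=emeasure])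
    with A show "emeasure (distr (M \<Otimes>\<^sub>M N) N snd) A = emeasure N A"
      by (simp add: N.emeasure_pair_measure_Times M.emeasure_space_1)
  qed simp
qed

lemma AE_pair_snd: "prob_space M \<Longrightarrow> prob_space N \<Longrightarrow> AE y in N. P y \<Longrightarrow> AE z in M \<Otimes>\<^sub>M N. P (snd z)"
proof -
  assume M: "prob_space M" and N: "prob_space N" and ae: "AE y in N. P y"
  have "AE x in distr (M \<Otimes>\<^sub>M N) N snd. P x" unfolding distr_pair_snd'[OF M N] using ae .
  then show ?thesis by (rule AE_distrD[OF measurable_snd])
qed

definition PM1 :: "nat \<Rightarrow> nat \<Rightarrow> (nat \<Rightarrow> real \<times> (nat \<Rightarrow> real)) measure" where
  "PM1 m n = PiM {..<n} (\<lambda>_. angle_dist \<Otimes>\<^sub>M orth_sphere_uniform (m - 1))"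

definition PM2 :: "nat \<Rightarrow> ((nat \<times> nat) \<times> nat \<Rightarrow> real) measure" where
  "PM2 n = PiM (node_pairs n \<times> UNIV) (\<lambda>_. exp1)"

lemma Omega_eq: "Omega m n = PM1 m n \<Otimes>\<^sub>M PM2 n"
  unfolding Omega_def PM1_def PM2_def ..

lemma prob_prof: "2 \<le> m \<Longrightarrow> prob_space (angle_dist \<Otimes>\<^sub>M orth_sphere_uniform (m - 1))"
  by (intro prob_space_pair prob_angle prob_orth) auto

lemma prob_PM1: "2 \<le> m \<Longrightarrow> prob_space (PM1 m n)"
  unfolding PM1_def by (intro prob_space_PiM prob_prof)

lemma prob_PM2: "prob_space (PM2 n)"
  unfolding PM2_def by (intro prob_space_PiM prob_exp1)

definition good :: "nat \<Rightarrow> (nat \<Rightarrow> real \<times> (nat \<Rightarrow> real)) \<times> ((nat \<times> nat) \<times> nat \<Rightarrow> real) \<Rightarrow> bool" where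
  "good n \<omega> = ((\<forall>k<n. 0 \<le> fst (fst \<omega> k) \<and> fst (fst \<omega> k) \<le> pi/2 \<and> 0 \<le> snd (fst \<omega> k) 0 \<and> snd (fst \<omega> k) 0 \<le> 1)
      \<and> (\<forall>j. j \<in> node_pairs n \<times> UNIV \<longrightarrow> 0 \<le> snd \<omega> j))"

lemma AE_good: "2 \<le> m \<Longrightarrow> AE \<omega> in Omega m n. good n \<omega>"
proof -
  assume m: "2 \<le> m"
  have prof: "AE x in angle_dist \<Otimes>\<^sub>M orth_sphere_uniform (m - 1).
      0 \<le> fst x \<and> fst x \<le> pi/2 \<and> 0 \<le> snd x 0 \<and> snd x 0 \<le> 1"
  proof -
    have "AE x in angle_dist \<Otimes>\<^sub>M orth_sphere_uniform (m - 1). 0 \<le> fst x \<and> fst x \<le> pi/2"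
      using m by (intro AE_pair_fst AE_angle prob_orth) auto
    moreover have "AE x in angle_dist \<Otimes>\<^sub>M orth_sphere_uniform (m - 1). 0 \<le> snd x 0 \<and> snd x 0 \<le> 1"
      using m by (intro AE_pair_snd AE_orth prob_orth prob_angle) auto
    ultimately show ?thesis by eventually_elim auto
  qed
  have a1: "AE P in PM1 m n. \<forall>k<n. 0 \<le> fst (P k) \<and> fst (P k) \<le> pi/2 \<and> 0 \<le> snd (P k) 0 \<and> snd (P k) 0 \<le> 1"
    unfolding AE_all_countable
  proof
    fix k
    show "AE P in PM1 m n. k < n \<longrightarrow> 0 \<le> fst (P k) \<and> fst (P k) \<le> pi/2 \<and> 0 \<le> snd (P k) 0 \<and> snd (P k) 0 \<le> 1"
    proof (cases "k < n")
      case True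
      have "AE P in PM1 m n. 0 \<le> fst (P k) \<and> fst (P k) \<le> pi/2 \<and> 0 \<le> snd (P k) 0 \<and> snd (P k) 0 \<le> 1"
        unfolding PM1_def using True m prof by (intro AE_PiM_component prob_prof) auto
      then show ?thesis by auto
    qed simp
  qed
  have a2: "AE E in PM2 n. \<forall>j. j \<in> node_pairs n \<times> UNIV \<longrightarrow> 0 \<le> E j"
    unfolding AE_all_countable
  proof
    fix j :: "(nat \<times> nat) \<times> nat"
    show "AE E in PM2 n. j \<in> node_pairs n \<times> UNIV \<longrightarrow> 0 \<le> E j"
    proof (cases "j \<in> node_pairs n \<times> UNIV")
      case True
      have "AE E in PM2 n. 0 \<le> E j"
        unfolding PM2_def using True by (intro AE_PiM_component prob_exp1 AE_exp1_nonneg) auto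
      then show ?thesis by auto
    qed simp
  qed
  have "AE \<omega> in PM1 m n \<Otimes>\<^sub>M PM2 n. \<forall>k<n. 0 \<le> fst (fst \<omega> k) \<and> fst (fst \<omega> k) \<le> pi/2 \<and> 0 \<le> snd (fst \<omega> k) 0 \<and> snd (fst \<omega> k) 0 \<le> 1"
    by (intro AE_pair_fst[OF prob_PM2 a1])
  moreover have "AE \<omega> in PM1 m n \<Otimes>\<^sub>M PM2 n. \<forall>j. j \<in> node_pairs n \<times> UNIV \<longrightarrow> 0 \<le> snd \<omega> j"
    using m by (intro AE_pair_snd[OF prob_PM1 prob_PM2 a2])
  ultimately show ?thesis unfolding Omega_eq good_def by eventually_elim auto
qed



definition PB :: "nat \<Rightarrow> nat \<Rightarrow> nat \<Rightarrow> real \<Rightarrow> (nat \<Rightarrow> real \<times> (nat \<Rightarrow> real)) set" where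
  "PB m n i a = PiE {..<n} (\<lambda>k. (if k = i then {a/2<..a} else UNIV) \<times> space (orth_sphere_uniform (m - 1)))"

definition NJ :: "nat \<Rightarrow> nat \<Rightarrow> ((nat \<times> nat) \<times> nat) set" where
  "NJ n i = insert ((0,1),0) (insert ((1,i+2),0) ((\<lambda>k. ((0,k),0)) ` {2..n+1}))"

definition NA :: "real \<Rightarrow> real \<Rightarrow> real \<Rightarrow> nat \<Rightarrow> (nat \<times> nat) \<times> nat \<Rightarrow> real set" where
  "NA K R t i j = (if j = ((0,1),0) \<or> j = ((1,i+2),0) then {1<..}
                   else if j = ((0,i+2),0) then {..K*t/2} else {R*t<..})"

definition NB :: "nat \<Rightarrow> real \<Rightarrow> real \<Rightarrow> real \<Rightarrow> nat \<Rightarrow> ((nat \<times> nat) \<times> nat \<Rightarrow> real) set" where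
  "NB n K R t i = prod_emb (node_pairs n \<times> UNIV) (\<lambda>_. exp1) (NJ n i) (PiE (NJ n i) (NA K R t i))"

lemma NJ_sub: "i < n \<Longrightarrow> NJ n i \<subseteq> node_pairs n \<times> UNIV"
  unfolding NJ_def node_pairs_def by auto

lemma NA_sets: "NA K R t i j \<in> sets exp1"
  unfolding NA_def by auto

lemma NA_sets': "NA K R t i j \<in> sets borel"
  unfolding NA_def by auto

lemma NB_sets: "i < n \<Longrightarrow> NB n K R t i \<in> sets (PM2 n)"
  unfolding NB_def PM2_def NJ_def
  by (rule sets_PiM_I) (auto simp: NJ_def[symmetric] NA_sets' node_pairs_def)

lemma PB_sets: "PB m n i a \<in> sets (PM1 m n)"
  unfolding PB_def PM1_def by (intro sets_PiM_I_finite pair_measureI) auto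

lemma emeasure_PB:
  assumes m: "2 \<le> m" and i: "i < n" and a: "0 < a" "a \<le> 1"
  shows "emeasure (PM1 m n) (PB m n i a) = ennreal (a / pi)"
proof -
  let ?M = "angle_dist \<Otimes>\<^sub>M orth_sphere_uniform (m - 1)"
  interpret O: prob_space "orth_sphere_uniform (m - 1)" using m by (intro prob_orth) auto
  interpret A: prob_space angle_dist by (rule prob_angle)
  interpret product_sigma_finite "\<lambda>_::nat. ?M"
    unfolding product_sigma_finite_def using prob_space_imp_sigma_finite[OF prob_prof[OF m]] by simp
  have f: "emeasure ?M ((if k = i then {a/2<..a} else UNIV) \<times> space (orth_sphere_uniform (m - 1)))
        = (if k = i then ennreal (a/pi) else 1)" for k
    using emeasure_angle[OF a] A.emeasure_space_1 O.emeasure_space_1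
    by (subst O.emeasure_pair_measure_Times) auto
  have "emeasure (PM1 m n) (PB m n i a) = (\<Prod>k<n. emeasure ?M ((if k = i then {a/2<..a} else UNIV) \<times> space (orth_sphere_uniform (m - 1))))"
    unfolding PB_def PM1_def by (subst emeasure_PiM) auto
  also have "\<dots> = (\<Prod>k<n. if k = i then ennreal (a/pi) else 1)"
    using f by (intro prod.cong) auto
  also have "\<dots> = ennreal (a/pi)" using i by (simp add: prod.delta)
  finally show ?thesis .
qed

lemma emeasure_NB:
  assumes i: "i < n" and K: "0 < K" and R: "0 < R" and t: "0 < t"
  shows "emeasure (PM2 n) (NB n K R t i)
     = ennreal (exp (-1)) * ennreal (exp (-1)) * (ennreal (1 - exp (-(K*t/2))) * ennreal (exp (-(R*t))) ^ (n - 1))"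
proof -
  let ?f = "\<lambda>k::nat. ((0::nat,k),0::nat)"
  have inj: "inj_on ?f {2..n+1}" by (auto simp: inj_on_def)
  have e1: "emeasure exp1 {1<..} = ennreal (exp (-1))" using emeasure_exp1_gt[of 1] by simp
  have "emeasure (PM2 n) (NB n K R t i) = (\<Prod>j\<in>NJ n i. emeasure exp1 (NA K R t i j))"
    unfolding PM2_def NB_def
    using i by (intro emeasure_PiM_emb prob_exp1 NJ_sub NA_sets) (auto simp: NJ_def)
  also have "\<dots> = emeasure exp1 (NA K R t i ((0,1),0)) * (emeasure exp1 (NA K R t i ((1,i+2),0)) *
      (\<Prod>j\<in>?f ` {2..n+1}. emeasure exp1 (NA K R t i j)))"
    unfolding NJ_def by (subst prod.insert; auto)+
  also have "(\<Prod>j\<in>?f ` {2..n+1}. emeasure exp1 (NA K R t i j)) = (\<Prod>k\<in>{2..n+1}. emeasure exp1 (NA K R t i (?f k)))"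
    using prod.reindex[OF inj, of "\<lambda>j. emeasure exp1 (NA K R t i j)"] by (simp add: comp_def)
  also have "\<dots> = emeasure exp1 (NA K R t i (?f (i+2))) * (\<Prod>k\<in>{2..n+1} - {i+2}. emeasure exp1 (NA K R t i (?f k)))"
    using i by (subst prod.remove[of _ "i+2"]) auto
  also have "(\<Prod>k\<in>{2..n+1} - {i+2}. emeasure exp1 (NA K R t i (?f k))) = (\<Prod>k\<in>{2..n+1} - {i+2}. ennreal (exp (-(R*t))))"
  proof (rule prod.cong)
    fix k assume "k \<in> {2..n+1} - {i+2}"
    then have "NA K R t i (?f k) = {R*t<..}" unfolding NA_def by auto
    then show "emeasure exp1 (NA K R t i (?f k)) = ennreal (exp (-(R*t)))"
      using emeasure_exp1_gt[of "R*t"] R t by simp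
  qed simp
  also have "\<dots> = ennreal (exp (-(R*t))) ^ (n - 1)"
    using i by (simp add: card_Diff_singleton)
  also have "NA K R t i (?f (i+2)) = {..K*t/2}" unfolding NA_def by auto
  also have "NA K R t i ((0,1),0) = {1<..}" unfolding NA_def by auto
  also have "NA K R t i ((1,i+2),0) = {1<..}" unfolding NA_def by auto
  finally show ?thesis using e1 emeasure_exp1_le[of "K*t/2"] K t by (simp add: mult.assoc)
qed



lemma mem_NB: "E \<in> NB n K R t i \<Longrightarrow> j \<in> NJ n i \<Longrightarrow> E j \<in> NA K R t i j"
  unfolding NB_def prod_emb_def by (auto simp: PiE_iff)

lemma PB_fst:
  assumes "P \<in> PB m n i a" "i < n"
  shows "fst (P i) \<in> {a/2<..a}"
proof -
  let ?T = "\<lambda>k. (if k = i then {a/2<..a} else UNIV) \<times> space (orth_sphere_uniform (m - 1))"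
  have "P i \<in> ?T i" using PiE_mem[of P "{..<n}" ?T i] assms unfolding PB_def by blast
  then show ?thesis by auto
qed

lemma half_pow_disj:
  assumes "(1/2::real)^s/2 < x" "x \<le> (1/2)^s" "(1/2::real)^s'/2 < x" "x \<le> (1/2)^s'"
  shows "s = s'"
proof (rule ccontr)
  assume "s \<noteq> s'"
  then consider "s < s'" | "s' < s" by linarith
  then show False
  proof cases
    case 1
    then have "(1/2::real)^s' \<le> (1/2)^(Suc s)" by (intro power_decreasing) auto
    then show False using assms by simp
  next
    case 2
    then have "(1/2::real)^s \<le> (1/2)^(Suc s')" by (intro power_decreasing) auto
    then show False using assms by simp
  qed
qed

lemma in_CC_unique:
  assumes K: "0 < K" and dl: "0 < dl" and R: "R = K + dl" and t: "0 < t"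
    and i: "i < n" and i': "i' < n"
    and w1: "\<omega> \<in> PB m n i ((1/2)^s) \<times> NB n K R t i"
    and w2: "\<omega> \<in> PB m n i' ((1/2)^s') \<times> NB n K R t i'"
  shows "i = i' \<and> s = s'"
proof -
  obtain P E where w: "\<omega> = (P, E)" by (cases \<omega>)
  have ii: "i = i'"
  proof (rule ccontr)
    assume ne: "i \<noteq> i'"
    have "((0,i+2),0) \<in> NJ n i" using i unfolding NJ_def by auto
    then have "E ((0,i+2),0) \<in> NA K R t i ((0,i+2),0)" using w1 w by (intro mem_NB) auto
    then have "E ((0,i+2),0) \<le> K*t/2" unfolding NA_def by auto
    moreover have "((0,i+2),0) \<in> NJ n i'" using i unfolding NJ_def by auto
    then have "E ((0,i+2),0) \<in> NA K R t i' ((0,i+2),0)" using w2 w by (intro mem_NB) auto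
    then have "R*t < E ((0,i+2),0)" unfolding NA_def using ne by auto
    moreover have "K*t/2 < R*t"
    proof -
      have "0 < K*t" "0 < dl*t" using K dl t by auto
      then show ?thesis using R by (simp add: distrib_right)
    qed
    ultimately show False by simp
  qed
  moreover have "s = s'"
  proof -
    have "fst (P i) \<in> {(1/2)^s/2<..(1/2)^s}" using w1 w i by (intro PB_fst) auto
    moreover have "fst (P i) \<in> {(1/2)^s'/2<..(1/2)^s'}" using w2 w i ii by (intro PB_fst) auto
    ultimately show ?thesis by (intro half_pow_disj[of s "fst (P i)" s']) auto
  qed
  ultimately show ?thesis by simp
qed

lemma in_CC_bound:
  assumes m: "2 \<le> m" and Kdef: "K = pi/2*(lam-dl)" and K: "0 < K" and dl: "0 < dl"
    and R: "R = K + dl" and t: "t = 1/(real(n+1)*R)"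
    and i: "i < n" and g: "good n \<omega>"
    and w: "\<omega> \<in> PB m n i ((1/2)^s) \<times> NB n K R t i"
  shows "1/(K*(1/2)^s+dl) \<le> fm_delivery_time m lam dl n \<omega>"
proof -
  obtain P E where wP: "\<omega> = (P, E)" by (cases \<omega>)
  have NA: "E j \<in> NA K R t i j" if "j \<in> NJ n i" for j using w wP that by (intro mem_NB) auto
  have "P \<in> PB m n i ((1/2)^s)" using w wP by auto
  then have ai: "fst (P i) \<in> {(1/2)^s/2<..(1/2)^s}" using i by (rule PB_fst)
  show ?thesis unfolding wP
  proof (rule det[OF m Kdef K dl i])
    show "0 < (1/2::real)^s" "(1/2::real)^s \<le> 1" by (auto simp: power_le_one)
    show "t = 1/(real(n+1)*(K+dl))" using t R by simp
    show "\<forall>k<n. 0 \<le> fst (P k) \<and> fst (P k) \<le> pi/2" using g wP unfolding good_def by auto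
    show "0 \<le> snd (P i) 0" "snd (P i) 0 \<le> 1" using g wP i unfolding good_def by auto
    show "\<forall>p\<in>node_pairs n. \<forall>l. 0 \<le> E (p,l)" using g wP unfolding good_def by auto
    show "fst (P i) \<le> (1/2)^s" using ai by auto
    show "1 < E ((0,1),0)" using NA[of "((0,1),0)"] unfolding NJ_def NA_def by auto
    show "1 < E ((1,i+2),0)" using NA[of "((1,i+2),0)"] unfolding NJ_def NA_def by auto
    show "E ((0,i+2),0) \<le> K*t/2" using NA[of "((0,i+2),0)"] i unfolding NJ_def NA_def by auto
    show "\<forall>k\<in>{2..n+1}. k \<noteq> i+2 \<longrightarrow> (K+dl)*t < E((0,k),0)"
    proof (intro ballI impI)
      fix k assume k: "k \<in> {2..n+1}" "k \<noteq> i+2"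
      then have "((0,k),0) \<in> NJ n i" unfolding NJ_def by auto
      then have "E ((0,k),0) \<in> NA K R t i ((0,k),0)" by (rule NA)
      then show "(K+dl)*t < E((0,k),0)" using k R unfolding NA_def by auto
    qed
  qed
qed



lemma one_minus_exp_ge: "0 \<le> x \<Longrightarrow> x \<le> 1 \<Longrightarrow> x/2 \<le> 1 - exp (-x::real)"
proof -
  assume x: "0 \<le> x" "x \<le> 1"
  have "1 + x \<le> exp x" by (rule exp_ge_add_one_self)
  then have "exp (-x) \<le> 1/(1+x)" using x by (simp add: exp_minus field_simps)
  moreover have "1/(1+x) \<le> 1 - x/2" using x by (simp add: field_simps) (smt (verit) mult_left_le)
  ultimately show ?thesis by linarith
qed

lemma term_bound:
  assumes K: "0 < K" and dl: "0 < dl" and R: "R = K + dl" and t: "t = 1/(real(n+1)*R)"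
    and n: "1 \<le> n" and a: "0 < a" "dl \<le> K*a"
  shows "exp(-3) * t / (8*pi) \<le>
     1/(K*a+dl) * (a/pi * (exp (-1) * exp (-1) * ((1 - exp (-(K*t/2))) * exp (-(R*t)) ^ (n - 1))))"
proof -
  have Rp: "0 < R" using R K dl by simp
  have tp: "0 < t" using t Rp by simp
  have Rt: "R*t = 1/real(n+1)" using t Rp by simp
  have h1: "1/(2*K) \<le> a/(K*a+dl)"
    using K a dl by (simp add: field_simps)
  have Kt: "K*t/2 \<le> 1"
  proof -
    have "K*t \<le> R*t" using R dl tp by (simp add: mult_right_mono)
    also have "\<dots> \<le> 1" using Rt by simp
    finally show ?thesis by simp
  qed
  have h2: "K*t/4 \<le> 1 - exp (-(K*t/2))"
    using one_minus_exp_ge[of "K*t/2"] Kt K tp by simp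
  have h3: "exp (-1) \<le> exp (-(R*t)) ^ (n - 1)"
  proof -
    have "exp (-(R*t)) ^ (n - 1) = exp (- (real (n - 1) * (R*t)))"
      by (simp add: exp_of_nat_mult[symmetric])
    moreover have "real (n - 1) * (R*t) \<le> 1"
    proof -
      have "real (n-1) * (R*t) \<le> real (n+1) * (R*t)" using Rp tp by (intro mult_right_mono) auto
      also have "\<dots> = 1" using Rt by simp
      finally show ?thesis .
    qed
    ultimately show ?thesis by simp
  qed
  have "exp(-3) * t / (8*pi) = (1/(2*K)) * (1/pi) * (exp (-1) * exp (-1) * ((K*t/4) * exp (-1)))"
    using K by (simp add: field_simps exp_add[symmetric] mult_exp_exp)
  also have "\<dots> \<le> (a/(K*a+dl)) * (1/pi) * (exp (-1) * exp (-1) * ((1 - exp (-(K*t/2))) * exp (-(R*t)) ^ (n - 1)))"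
    using h1 h2 h3 K tp a dl
    by (intro mult_mono mult_nonneg_nonneg) auto
  also have "\<dots> = 1/(K*a+dl) * (a/pi * (exp (-1) * exp (-1) * ((1 - exp (-(K*t/2))) * exp (-(R*t)) ^ (n - 1))))"
    by simp
  finally show ?thesis .
qed



lemma ennreal_prod5:
  fixes x e p q :: real
  assumes "0 \<le> x" "0 \<le> e" "0 \<le> p" "0 \<le> q"
  shows "ennreal x * (ennreal e * ennreal e * (ennreal p * ennreal q ^ k)) = ennreal (x * (e*e*(p*q^k)))"
  using assms by (simp add: ennreal_mult ennreal_power)

lemma main_bound:
  assumes m: "2 \<le> m" and Kdef: "K = pi/2*(lam-dl)" and K: "0 < K" and dl: "0 < dl"
    and R: "R = K + dl" and t: "t = 1/(real(n+1)*R)" and n: "1 \<le> n"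
    and S: "dl \<le> K * (1/2)^S"
  shows "ennreal (real (S+1) * (exp(-3) / (16*pi*R))) \<le>
         (\<integral>\<^sup>+ \<omega>. ennreal (fm_delivery_time m lam dl n \<omega>) \<partial>Omega m n)"
proof -
  define CC where "CC i s = PB m n i ((1/2)^s) \<times> NB n K R t i" for i s
  define I where "I = {..<n} \<times> {..S}"
  define ts where "ts s = 1/(K*(1/2::real)^s+dl)" for s :: nat
  define g where "g \<omega> = (\<Sum>p\<in>I. ennreal (ts (snd p)) * indicator (CC (fst p) (snd p)) \<omega>)" for \<omega>
  have Rp: "0 < R" using R K dl by simp
  have tp: "0 < t" using t Rp by simp
  have CC_sets: "CC i s \<in> sets (Omega m n)" if "i < n" for i s
    unfolding CC_def Omega_eq using that by (intro pair_measureI PB_sets NB_sets)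
  have pw: "g \<omega> \<le> ennreal (fm_delivery_time m lam dl n \<omega>)" if gd: "good n \<omega>" for \<omega>
  proof (cases "\<exists>p\<in>I. \<omega> \<in> CC (fst p) (snd p)")
    case True
    then obtain p where p: "p \<in> I" "\<omega> \<in> CC (fst p) (snd p)" by blast
    have zero: "ennreal (ts (snd q)) * indicator (CC (fst q) (snd q)) \<omega> = 0" if "q \<in> I - {p}" for q
    proof -
      have "\<omega> \<notin> CC (fst q) (snd q)"
      proof
        assume "\<omega> \<in> CC (fst q) (snd q)"
        then have "fst p = fst q \<and> snd p = snd q"
          using p that K dl R tp unfolding CC_def I_def
          by (intro in_CC_unique[where \<omega>=\<omega> and m=m and K=K and dl=dl and R=R and t=t and n=n]) auto
        then show False using that by (cases p, cases q) auto
      qed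
      then show ?thesis by simp
    qed
    have "g \<omega> = ennreal (ts (snd p)) * indicator (CC (fst p) (snd p)) \<omega> +
        (\<Sum>q\<in>I - {p}. ennreal (ts (snd q)) * indicator (CC (fst q) (snd q)) \<omega>)"
      unfolding g_def using p(1) by (subst sum.remove[of I p]) (auto simp: I_def)
    also have "(\<Sum>q\<in>I - {p}. ennreal (ts (snd q)) * indicator (CC (fst q) (snd q)) \<omega>) = 0"
      using zero by (intro sum.neutral) blast
    also have "ennreal (ts (snd p)) * indicator (CC (fst p) (snd p)) \<omega> + 0 = ennreal (ts (snd p))" using p by simp
    also have "\<dots> \<le> ennreal (fm_delivery_time m lam dl n \<omega>)"
      using p gd unfolding ts_def CC_def I_def
      by (intro ennreal_leI in_CC_bound[OF m Kdef K dl R t]) auto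
    finally show ?thesis .
  next
    case False
    then have "g \<omega> = 0" unfolding g_def by (intro sum.neutral) auto
    then show ?thesis by simp
  qed
  have "(\<integral>\<^sup>+ \<omega>. g \<omega> \<partial>Omega m n) \<le> (\<integral>\<^sup>+ \<omega>. ennreal (fm_delivery_time m lam dl n \<omega>) \<partial>Omega m n)"
    using AE_good[OF m, of n] by (intro nn_integral_mono_AE) (auto elim!: AE_mp intro: pw)
  moreover have "(\<integral>\<^sup>+ \<omega>. g \<omega> \<partial>Omega m n) = (\<Sum>p\<in>I. ennreal (ts (snd p)) * emeasure (Omega m n) (CC (fst p) (snd p)))"
  proof -
    have "(\<integral>\<^sup>+ \<omega>. g \<omega> \<partial>Omega m n) = (\<Sum>p\<in>I. \<integral>\<^sup>+ \<omega>. ennreal (ts (snd p)) * indicator (CC (fst p) (snd p)) \<omega> \<partial>Omega m n)"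
      unfolding g_def
    proof (rule nn_integral_sum)
      fix p assume "p \<in> I"
      then have [measurable]: "CC (fst p) (snd p) \<in> sets (Omega m n)" by (intro CC_sets) (auto simp: I_def)
      show "(\<lambda>\<omega>. ennreal (ts (snd p)) * indicator (CC (fst p) (snd p)) \<omega>) \<in> borel_measurable (Omega m n)"
        by measurable
    qed
    also have "\<dots> = (\<Sum>p\<in>I. ennreal (ts (snd p)) * emeasure (Omega m n) (CC (fst p) (snd p)))"
    proof (rule sum.cong[OF refl])
      fix p assume "p \<in> I"
      then have "CC (fst p) (snd p) \<in> sets (Omega m n)" by (intro CC_sets) (auto simp: I_def)
      then show "(\<integral>\<^sup>+ \<omega>. ennreal (ts (snd p)) * indicator (CC (fst p) (snd p)) \<omega> \<partial>Omega m n) = ennreal (ts (snd p)) * emeasure (Omega m n) (CC (fst p) (snd p))"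
        by (rule nn_integral_cmult_indicator)
    qed
    finally show ?thesis .
  qed
  moreover have "ennreal (real (S+1) * (exp(-3) / (16*pi*R))) \<le> (\<Sum>p\<in>I. ennreal (ts (snd p)) * emeasure (Omega m n) (CC (fst p) (snd p)))"
  proof -
    have tb: "ennreal (exp(-3) * t / (8*pi)) \<le> ennreal (ts (snd p)) * emeasure (Omega m n) (CC (fst p) (snd p))"
      if "p \<in> I" for p
    proof -
      obtain i s where ps: "p = (i, s)" by (cases p)
      have i: "i < n" and s: "s \<le> S" using that ps unfolding I_def by auto
      have a: "0 < (1/2::real)^s" "(1/2::real)^s \<le> 1" by (auto simp: power_le_one)
      have "(1/2::real)^S \<le> (1/2)^s" using s by (intro power_decreasing) auto
      then have das: "dl \<le> K * (1/2)^s" using S K by (smt (verit) mult_left_mono)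
      interpret P2: prob_space "PM2 n" by (rule prob_PM2)
      have "emeasure (Omega m n) (CC i s) = emeasure (PM1 m n) (PB m n i ((1/2)^s)) * emeasure (PM2 n) (NB n K R t i)"
        unfolding CC_def Omega_eq using i by (intro P2.emeasure_pair_measure_Times PB_sets NB_sets)
      also have "\<dots> = ennreal ((1/2)^s / pi) * (ennreal (exp (-1)) * ennreal (exp (-1)) * (ennreal (1 - exp (-(K*t/2))) * ennreal (exp (-(R*t))) ^ (n - 1)))"
        using emeasure_PB[OF m i a] emeasure_NB[OF i K Rp tp] by simp
      also have "\<dots> = ennreal ((1/2)^s / pi * (exp (-1) * exp (-1) * ((1 - exp (-(K*t/2))) * exp (-(R*t)) ^ (n - 1))))"
        using K tp by (intro ennreal_prod5) auto
      finally have em: "emeasure (Omega m n) (CC i s) = \<dots>" .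
      have "exp(-3) * t / (8*pi) \<le> ts s * ((1/2)^s / pi * (exp (-1) * exp (-1) * ((1 - exp (-(K*t/2))) * exp (-(R*t)) ^ (n - 1))))"
        unfolding ts_def using term_bound[OF K dl R t n a(1) das] by simp
      then have "ennreal (exp(-3) * t / (8*pi)) \<le> ennreal (ts s * ((1/2)^s / pi * (exp (-1) * exp (-1) * ((1 - exp (-(K*t/2))) * exp (-(R*t)) ^ (n - 1)))))"
        by (rule ennreal_leI)
      also have "\<dots> = ennreal (ts s) * emeasure (Omega m n) (CC i s)"
        unfolding em using K dl a by (subst ennreal_mult') (auto simp: ts_def)
      finally show ?thesis using ps by simp
    qed
    have "ennreal (real (S+1) * (exp(-3) / (16*pi*R))) \<le> ennreal (real (card I) * (exp(-3) * t / (8*pi)))"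
    proof (rule ennreal_leI)
      have cI: "real (card I) = real n * real (S+1)" unfolding I_def by (simp add: card_cartesian_product algebra_simps)
      have "real (S+1) * (exp(-3) / (16*pi*R)) = real (S+1) * (exp(-3) / (8*pi)) * (1/(2*R))"
        by (simp add: field_simps)
      also have "\<dots> \<le> real (S+1) * (exp(-3) / (8*pi)) * (real n * t)"
      proof (intro mult_left_mono)
        have "1/2 \<le> real n / real (n+1)" using n by (simp add: field_simps)
        then have "(1/2) * (1/R) \<le> (real n / real (n+1)) * (1/R)"
          using Rp by (intro mult_right_mono) auto
        then have "1/(2*R) \<le> real n / (real (n+1) * R)" by simp
        then show "1/(2*R) \<le> real n * t" using t by simp
      qed auto
      also have "\<dots> = real (card I) * (exp(-3) * t / (8*pi))" using cI by (simp add: field_simps)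
      finally show "real (S+1) * (exp(-3) / (16*pi*R)) \<le> real (card I) * (exp(-3) * t / (8*pi))" .
    qed
    also have "\<dots> = (\<Sum>p\<in>I. ennreal (exp(-3) * t / (8*pi)))"
    proof -
      have "(\<Sum>p\<in>I. ennreal (exp(-3) * t / (8*pi))) = of_nat (card I) * ennreal (exp(-3) * t / (8*pi))"
        by simp
      also have "\<dots> = ennreal (real (card I)) * ennreal (exp(-3) * t / (8*pi))"
        by (simp only: ennreal_of_nat_eq_real_of_nat)
      also have "\<dots> = ennreal (real (card I) * (exp(-3) * t / (8*pi)))"
        by (rule ennreal_mult'[symmetric]) simp
      finally show ?thesis by simp
    qed
    also have "\<dots> \<le> (\<Sum>p\<in>I. ennreal (ts (snd p)) * emeasure (Omega m n) (CC (fst p) (snd p)))"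
      by (intro sum_mono tb)
    finally show ?thesis .
  qed
  ultimately show ?thesis by simp
qed



lemma fixed_bound:
  assumes m: "2 \<le> m" and lam: "0 < lam" and dl: "0 < dl" "dl \<le> 1" "dl \<le> lam/2" "dl \<le> (lam/2)^2"
    and n: "1 \<le> n"
  shows "ennreal (exp(-3)/(64*pi*lam) * ln(1/dl)) \<le> (\<integral>\<^sup>+ \<omega>. ennreal (fm_delivery_time m lam dl n \<omega>) \<partial>Omega m n)"
proof -
  define K where "K = pi/2*(lam-dl)"
  define R where "R = K + dl"
  define t where "t = 1/(real(n+1)*R)"
  define x where "x = lam/(2*dl)"
  define S where "S = nat \<lfloor>log 2 x\<rfloor>"
  have Klo: "lam/2 \<le> K"
  proof -
    have "lam/2 \<le> lam - dl" using dl by simp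
    moreover have "1 \<le> pi/2" using pi_gt3 by simp
    ultimately have "1 * (lam/2) \<le> pi/2 * (lam - dl)" using lam by (intro mult_mono) auto
    then show ?thesis unfolding K_def by simp
  qed
  have K: "0 < K" using Klo lam by simp
  have Rhi: "R \<le> 2*lam"
  proof -
    have "pi/2 * (lam - dl) \<le> 2 * (lam - dl)" using pi_less_4 dl by (intro mult_right_mono) auto
    then show ?thesis unfolding R_def K_def using dl by simp
  qed
  have Rp: "0 < R" using R_def K dl by simp
  have x1: "1 \<le> x" unfolding x_def using dl by (simp add: field_simps)
  have lx: "0 \<le> log 2 x" using x1 by simp
  have rS: "real S = real_of_int \<lfloor>log 2 x\<rfloor>" unfolding S_def using lx by simp
  have "(2::real)^S = 2 powr (real S)" by (simp add: powr_realpow)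
  also have "\<dots> \<le> 2 powr (log 2 x)" using rS by (intro powr_mono) auto
  also have "\<dots> = x" using x1 by simp
  finally have pS: "(2::real)^S \<le> x" .
  have Sb: "dl \<le> K * (1/2)^S"
  proof -
    have "dl = (lam/2) / x" unfolding x_def using dl lam by (simp add: field_simps)
    also have "\<dots> \<le> (lam/2) / 2^S" using pS lam x1 by (intro divide_left_mono) auto
    also have "\<dots> = (lam/2) * (1/2)^S" by (simp add: power_one_over)
    also have "\<dots> \<le> K * (1/2)^S" using Klo by (intro mult_right_mono) auto
    finally show ?thesis .
  qed
  have mb: "ennreal (real (S+1) * (exp(-3) / (16*pi*R))) \<le> (\<integral>\<^sup>+ \<omega>. ennreal (fm_delivery_time m lam dl n \<omega>) \<partial>Omega m n)"
    by (rule main_bound[OF m K_def K dl(1) R_def t_def n Sb])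
  have lnd: "0 \<le> ln (1/dl)" using dl by simp
  have "ln (1/dl)/2 \<le> real (S+1)"
  proof -
    have "ln (lam/2) \<ge> - ln (1/dl) / 2"
    proof -
      have "2 * ln (lam/2) = ln ((lam/2)^2)" using lam by (simp add: ln_realpow)
      also have "\<dots> \<ge> ln dl" using dl lam by simp
      finally have "ln dl \<le> 2 * ln (lam/2)" .
      then show ?thesis using dl by (simp add: ln_div)
    qed
    moreover have "ln x = ln (lam/2) + ln (1/dl)" unfolding x_def using lam dl
      by (simp add: ln_div ln_mult)
    ultimately have lxb: "ln (1/dl)/2 \<le> ln x" by simp
    moreover have "ln x \<le> log 2 x"
    proof -
      have "0 \<le> ln x" using x1 by simp
      moreover have "ln 2 \<le> (1::real)" using ln_2_less_1 by simp
      moreover have "0 < ln (2::real)" by simp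
      ultimately have "ln x * ln 2 \<le> ln x" by (simp add: mult_left_le)
      then show ?thesis unfolding log_def using \<open>0 < ln 2\<close> by (simp add: le_divide_eq)
    qed
    moreover have "log 2 x \<le> real (S+1)" using rS by linarith
    ultimately show ?thesis by linarith
  qed
  then have "exp(-3)/(64*pi*lam) * ln(1/dl) \<le> real (S+1) * (exp(-3) / (16*pi*R))"
  proof -
    assume h: "ln (1/dl)/2 \<le> real (S+1)"
    have "exp(-3)/(64*pi*lam) * ln(1/dl) = (ln (1/dl)/2) * (exp(-3)/(16*pi*(2*lam)))"
      by (simp add: field_simps)
    also have "\<dots> \<le> real (S+1) * (exp(-3)/(16*pi*(2*lam)))"
      using h lam by (intro mult_right_mono) auto
    also have "\<dots> \<le> real (S+1) * (exp(-3)/(16*pi*R))"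
      using Rhi Rp by (intro mult_left_mono divide_left_mono mult_left_mono) auto
    finally show ?thesis .
  qed
  then show ?thesis using mb by (meson ennreal_leI order_trans)
qed



theorem theorem1:
  fixes m :: nat and lam :: real and \<delta> :: "nat \<Rightarrow> real"
  assumes "2 \<le> m" and "0 < lam" and "\<forall>n. 0 < \<delta> n" and "\<delta> \<longlonglongrightarrow> 0"
  shows "(\<exists>c c'. 0 < c \<and> 0 < c' \<and>
            (\<forall>\<^sub>F n in sequentially.
               expected_fm_time m lam \<delta> n
                 \<ge> ennreal (min (c * ln (1 / \<delta> n)) (c' * real n / ln (real n)))))
         \<and> (expected_fm_time m lam \<delta> \<longlongrightarrow> \<infinity>) sequentially"
proof -
  note m = assms(1) and lam = assms(2) and dpos = assms(3) and dlim = assms(4)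
  define c where "c = exp(-3)/(64*pi*lam)"
  have c: "0 < c" unfolding c_def using lam by simp
  define \<epsilon> where "\<epsilon> = min 1 (min (lam/2) ((lam/2)^2))"
  have \<epsilon>: "0 < \<epsilon>" unfolding \<epsilon>_def using lam by simp
  have ev: "\<forall>\<^sub>F n in sequentially. ennreal (c * ln (1 / \<delta> n)) \<le> expected_fm_time m lam \<delta> n"
  proof -
    have "\<forall>\<^sub>F n in sequentially. \<delta> n < \<epsilon>" using order_tendstoD(2)[OF dlim \<epsilon>] .
    moreover have "\<forall>\<^sub>F n in sequentially. 1 \<le> n" by (rule eventually_ge_at_top)
    ultimately show ?thesis
    proof eventually_elim
      case (elim n)
      have "\<delta> n \<le> 1" "\<delta> n \<le> lam/2" "\<delta> n \<le> (lam/2)^2" using elim(1) unfolding \<epsilon>_def by auto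
      then show ?case unfolding expected_fm_time_def c_def
        using fixed_bound[OF m lam dpos[rule_format, of n] _ _ _ elim(2)] by simp
    qed
  qed
  have part1: "\<exists>c c'. 0 < c \<and> 0 < c' \<and>
            (\<forall>\<^sub>F n in sequentially.
               expected_fm_time m lam \<delta> n
                 \<ge> ennreal (min (c * ln (1 / \<delta> n)) (c' * real n / ln (real n))))"
  proof (intro exI conjI)
    show "0 < c" by (rule c)
    show "(0::real) < 1" by simp
    show "\<forall>\<^sub>F n in sequentially. expected_fm_time m lam \<delta> n \<ge> ennreal (min (c * ln (1 / \<delta> n)) (1 * real n / ln (real n)))"
      using ev by eventually_elim (meson ennreal_leI min.cobounded1 order_trans)
  qed
  have part2: "(expected_fm_time m lam \<delta> \<longlongrightarrow> \<infinity>) sequentially"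
    unfolding order_tendsto_iff
  proof (intro conjI allI impI)
    fix l :: ennreal assume "l < \<infinity>"
    then obtain r where r: "l = ennreal r" "0 \<le> r" by (cases l rule: ennreal_cases) auto
    define e where "e = exp (-(r/c + 1))"
    have e: "0 < e" unfolding e_def by simp
    have "\<forall>\<^sub>F n in sequentially. \<delta> n < e" using order_tendstoD(2)[OF dlim e] .
    with ev show "\<forall>\<^sub>F n in sequentially. l < expected_fm_time m lam \<delta> n"
    proof eventually_elim
      case (elim n)
      have dn: "0 < \<delta> n" using dpos by simp
      have "ln (\<delta> n) < -(r/c + 1)" using elim(2) dn unfolding e_def
        by (metis exp_less_cancel_iff exp_ln)
      then have "r/c < ln (1/\<delta> n)" using dn by (simp add: ln_div)
      then have "r < c * ln (1/\<delta> n)" using c by (simp add: field_simps)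
      then have "ennreal r < ennreal (c * ln (1/\<delta> n))" using r(2) by (simp add: ennreal_less_iff)
      then show ?case using elim(1) r(1) by simp
    qed
  qed simp
  show ?thesis using part1 part2 by blast
qed


end
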